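(* Let $\mathcal{X}\subset\mathbb{R}^n$ be a convex connected domain and $K:\mathcal{X}\to\mathbb{R}$ a smooth function whose Hessian $G(x)=\nabla^2K(x)$ is invertible for all $x$. Let $\mathcal{U}=\mathbb{R}^m$, $\mathcal{Y}=\mathcal{U}^*\cong\mathbb{R}^m$, let $\sigma$ be an $m\times m$ signature matrix, and consider the smooth system $\dot x=F(x,u)$, $y=H(x,u)$. Then the system is reciprocal with respect to $G$ and $\sigma$ if and only if for all $x,u$ $$\sigma\frac{\partial H(x,u)}{\partial u}=\Big(\frac{\partial H(x,u)}{\partial u}\Big)^\top\sigma,\qquad G(x)\frac{\partial F(x,u)}{\partial u}=\Big(\frac{\partial H(x,u)}{\partial x}\Big)^\top\sigma,\qquad G(x)\frac{\partial F(x,u)}{\partial x}=\Big(\frac{\partial F(x,u)}{\partial x}\Big)^\top G(x).$$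
   Context: A signature matrix is a diagonal matrix with diagonal entries $\pm1$. Partial derivative matrices are Jacobians. On $T^*\mathcal{X}\times\mathcal{U}\times\mathcal{Y}$ with coordinates $(x,p,u,y)$ consider the symplectic form $\omega=\sum_i dp_i\wedge dx_i+\sum_j dy_j\wedge du_j$; a Lagrangian submanifold is a submanifold on which $\omega$ vanishes and which is maximal with this property. The system is reciprocal with respect to $G$ and $\sigma$ if the set $\{(x,p,u,y): p=G(x)F(x,u),\ y=\sigma H(x,u)\}$ is a Lagrangian submanifold of $T^*\mathcal{X}\times\mathcal{U}\times\mathcal{Y}$. *)

theory Defs
  imports "HOL-Analysis.Analysis"
begin

coinductive smooth_on :: "'a::real_normed_vector set \<Rightarrow> ('a \<Rightarrow> 'b::real_normed_vector) \<Rightarrow> bool"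
  where "f differentiable_on S \<Longrightarrow>
         (\<And>v. smooth_on S (\<lambda>x. frechet_derivative f (at x) v)) \<Longrightarrow> smooth_on S f"

definition gradient_vec :: "(real^'n \<Rightarrow> real) \<Rightarrow> real^'n \<Rightarrow> real^'n" where
  "gradient_vec K x = (\<chi> i. frechet_derivative K (at x) (axis i 1))"

definition hessian :: "(real^'n \<Rightarrow> real) \<Rightarrow> real^'n \<Rightarrow> real^'n^'n" where
  "hessian K x = matrix (frechet_derivative (gradient_vec K) (at x))"

definition jac_x :: "(real^'n \<Rightarrow> real^'m \<Rightarrow> real^'k) \<Rightarrow> real^'n \<Rightarrow> real^'m \<Rightarrow> real^'n^'k" where
  "jac_x F x u = matrix (frechet_derivative (\<lambda>x'. F x' u) (at x))"

definition jac_u :: "(real^'n \<Rightarrow> real^'m \<Rightarrow> real^'k) \<Rightarrow> real^'n \<Rightarrow> real^'m \<Rightarrow> real^'m^'k" where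
  "jac_u F x u = matrix (frechet_derivative (\<lambda>u'. F x u') (at u))"

definition signature_matrix :: "real^'m^'m \<Rightarrow> bool" where
  "signature_matrix S \<longleftrightarrow> (\<forall>i j. i \<noteq> j \<longrightarrow> S $ i $ j = 0) \<and> (\<forall>i. S $ i $ i = 1 \<or> S $ i $ i = -1)"

text \<open>The symplectic form on T*X x U x Y (tangent vectors ((dx,dp),(du,dy))):
  omega = sum dp_i /\ dx_i + sum dy_j /\ du_j.\<close>
definition symp_form :: "(((real^'n) \<times> (real^'n)) \<times> ((real^'m) \<times> (real^'m))) \<Rightarrow>
    (((real^'n) \<times> (real^'n)) \<times> ((real^'m) \<times> (real^'m))) \<Rightarrow> real" where
  "symp_form v w = (case v of ((a,b),(c,d)) \<Rightarrow> case w of ((a',b'),(c',d')) \<Rightarrow>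
      b \<bullet> a' - b' \<bullet> a + d \<bullet> c' - d' \<bullet> c)"

definition isotropic_subspace ::
  "(((real^'n) \<times> (real^'n)) \<times> ((real^'m) \<times> (real^'m))) set \<Rightarrow> bool" where
  "isotropic_subspace V \<longleftrightarrow> subspace V \<and> (\<forall>v\<in>V. \<forall>w\<in>V. symp_form v w = 0)"

definition lagrangian_subspace ::
  "(((real^'n) \<times> (real^'n)) \<times> ((real^'m) \<times> (real^'m))) set \<Rightarrow> bool" where
  "lagrangian_subspace V \<longleftrightarrow> isotropic_subspace V \<and>
     (\<forall>W. isotropic_subspace W \<and> V \<subseteq> W \<longrightarrow> W = V)"

text \<open>The set {(x,p,u,y). p = G x F(x,u), y = sigma H(x,u)} (x in X) is the image of
  the graph parametrisation below; its tangent space at the point over (x,u) is the range of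
  the derivative of the parametrisation.  Being a Lagrangian submanifold means every tangent
  space is a Lagrangian subspace.\<close>
definition recip_param where
  "recip_param G S F H = (\<lambda>(x,u). ((x, G x *v F x u), (u, S *v H x u)))"

definition reciprocal ::
  "(real^'n \<Rightarrow> real^'n^'n) \<Rightarrow> real^'m^'m \<Rightarrow> (real^'n) set \<Rightarrow>
   (real^'n \<Rightarrow> real^'m \<Rightarrow> real^'n) \<Rightarrow> (real^'n \<Rightarrow> real^'m \<Rightarrow> real^'m) \<Rightarrow> bool" where
  "reciprocal G S X F H \<longleftrightarrow>
     (\<forall>x\<in>X. \<forall>u. lagrangian_subspace (range (frechet_derivative (recip_param G S F H) (at (x,u)))))"

end

theory Submission
  imports Defs
begin


abbreviation dd :: "('a::real_normed_vector \<Rightarrow> 'b::real_normed_vector) \<Rightarrow> 'a \<Rightarrow> 'a \<Rightarrow> 'b" where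
  "dd f v z \<equiv> frechet_derivative f (at z) v"

lemma smooth_diffon: "smooth_on S f \<Longrightarrow> f differentiable_on S"
  by (erule smooth_on.cases) simp

lemma smooth_dd: "smooth_on S f \<Longrightarrow> smooth_on S (\<lambda>x. dd f v x)"
  by (erule smooth_on.cases) simp

lemma smooth_at: "smooth_on S f \<Longrightarrow> open S \<Longrightarrow> x \<in> S \<Longrightarrow> f differentiable (at x)"
  using smooth_diffon differentiable_on_eq_differentiable_at by blast

lemma smooth_has: "smooth_on S f \<Longrightarrow> open S \<Longrightarrow> x \<in> S \<Longrightarrow>
   (f has_derivative frechet_derivative f (at x)) (at x)"
  using smooth_at frechet_derivative_works by blast

lemma line_deriv:
  fixes f :: "'a::real_normed_vector \<Rightarrow> real"
  assumes "f differentiable (at (c + s *\<^sub>R w))"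
  shows "((\<lambda>s. f (c + s *\<^sub>R w)) has_derivative (\<lambda>h. h * dd f w (c + s *\<^sub>R w))) (at s)"
proof -
  have f: "(f has_derivative frechet_derivative f (at (c + s *\<^sub>R w))) (at (c + s *\<^sub>R w))"
    using assms frechet_derivative_works by blast
  interpret bl: bounded_linear "frechet_derivative f (at (c + s *\<^sub>R w))"
    using f has_derivative_bounded_linear by blast
  have l: "((\<lambda>s. c + s *\<^sub>R w) has_derivative (\<lambda>h. h *\<^sub>R w)) (at s)"
    by (auto intro!: derivative_eq_intros)
  show ?thesis
    using has_derivative_compose[OF l f] by (simp add: bl.scaleR)
qed

lemma mvt_line2:
  fixes f :: "'a::real_normed_vector \<Rightarrow> real"
  assumes t: "0 < t"
    and dc: "\<And>s. 0 \<le> s \<Longrightarrow> s \<le> t \<Longrightarrow> f differentiable (at (c + s *\<^sub>R w))"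
    and dd': "\<And>s. 0 \<le> s \<Longrightarrow> s \<le> t \<Longrightarrow> f differentiable (at (d + s *\<^sub>R w))"
  shows "\<exists>s\<in>{0<..<t}. (f (c + t *\<^sub>R w) - f c) - (f (d + t *\<^sub>R w) - f d) =
           t * (dd f w (c + s *\<^sub>R w) - dd f w (d + s *\<^sub>R w))"
proof -
  have "\<exists>s\<in>{0<..<t}. (f (c + t *\<^sub>R w) - f (d + t *\<^sub>R w)) - (f (c + 0 *\<^sub>R w) - f (d + 0 *\<^sub>R w)) =
           (\<lambda>h. h * dd f w (c + s *\<^sub>R w) - h * dd f w (d + s *\<^sub>R w)) (t - 0)"
    apply (rule mvt_simple[OF t])
    apply (rule has_derivative_at_withinI)
    apply (rule has_derivative_diff)
    by (auto intro: line_deriv dc dd')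
  then show ?thesis by (auto simp: algebra_simps)
qed

lemma mvt_line1:
  fixes f :: "'a::real_normed_vector \<Rightarrow> real"
  assumes t: "0 < t"
    and dc: "\<And>s. 0 \<le> s \<Longrightarrow> s \<le> t \<Longrightarrow> f differentiable (at (c + s *\<^sub>R w))"
  shows "\<exists>s\<in>{0<..<t}. f (c + t *\<^sub>R w) - f c = t * dd f w (c + s *\<^sub>R w)"
proof -
  have "\<exists>s\<in>{0<..<t}. f (c + t *\<^sub>R w) - f (c + 0 *\<^sub>R w) =
           (\<lambda>h. h * dd f w (c + s *\<^sub>R w)) (t - 0)"
    apply (rule mvt_simple[OF t])
    apply (rule has_derivative_at_withinI)
    by (auto intro: line_deriv dc)
  then show ?thesis by (auto simp: algebra_simps)
qed

lemma small_step:
  fixes y v w :: "'a::real_normed_vector"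
  assumes "0 \<le> s" "s \<le> t" "0 \<le> r" "r \<le> t" "t * (norm v + norm w) < e"
  shows "y + s *\<^sub>R v + r *\<^sub>R w \<in> ball y e"
proof -
  have "norm (s *\<^sub>R v + r *\<^sub>R w) \<le> s * norm v + r * norm w"
    using norm_triangle_ineq[of "s *\<^sub>R v" "r *\<^sub>R w"] assms by simp
  also have "\<dots> \<le> t * norm v + t * norm w"
    using assms by (intro add_mono mult_right_mono) auto
  finally have "norm (s *\<^sub>R v + r *\<^sub>R w) < e" using assms(5) by (metis distrib_left order_le_less_trans)
  moreover have "dist y (y + s *\<^sub>R v + r *\<^sub>R w) = norm (s *\<^sub>R v + r *\<^sub>R w)"
    by (metis add.assoc add_diff_cancel_left' dist_commute dist_norm)
  ultimately show ?thesis by simp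
qed

lemma schwarz:
  fixes f :: "'a::real_normed_vector \<Rightarrow> real"
  assumes X: "open X" and y: "y \<in> X" and sm: "smooth_on X f"
  shows "dd (\<lambda>z. dd f w z) v y = dd (\<lambda>z. dd f v z) w y"
proof (rule ccontr)
  define g1 where "g1 = (\<lambda>z. dd f w z)"
  define g2 where "g2 = (\<lambda>z. dd f v z)"
  define h1 where "h1 = (\<lambda>z. dd g1 v z)"
  define h2 where "h2 = (\<lambda>z. dd g2 w z)"
  have sg1: "smooth_on X g1" and sg2: "smooth_on X g2" unfolding g1_def g2_def using sm smooth_dd by auto
  have sh1: "smooth_on X h1" and sh2: "smooth_on X h2" unfolding h1_def h2_def using sg1 sg2 smooth_dd by auto
  have c1: "isCont h1 y" and c2: "isCont h2 y"
    using sh1 sh2 smooth_diffon differentiable_imp_continuous_on continuous_on_eq_continuous_at X y by blast+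
  assume "dd (\<lambda>z. dd f w z) v y \<noteq> dd (\<lambda>z. dd f v z) w y"
  then have ne: "h1 y \<noteq> h2 y" unfolding h1_def h2_def g1_def g2_def .
  define e where "e = \<bar>h1 y - h2 y\<bar> / 2"
  have e: "e > 0" using ne by (simp add: e_def)
  obtain d1 where d1: "d1 > 0" "\<And>z. dist z y < d1 \<Longrightarrow> dist (h1 z) (h1 y) < e"
    using c1 e by (metis continuous_at_eps_delta)
  obtain d2 where d2: "d2 > 0" "\<And>z. dist z y < d2 \<Longrightarrow> dist (h2 z) (h2 y) < e"
    using c2 e by (metis continuous_at_eps_delta)
  obtain d0 where d0: "d0 > 0" "ball y d0 \<subseteq> X" using X y openE by blast
  define d where "d = min d0 (min d1 d2)"
  have d: "d > 0" using d0 d1 d2 by (simp add: d_def)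
  define t where "t = d / (2 * (norm v + norm w + 1))"
  have den: "2 * (norm v + norm w + 1) > 0" by (smt (verit) norm_ge_zero)
  have t: "t > 0" using d den by (simp add: t_def)
  have "t * (norm v + norm w) \<le> t * (norm v + norm w + 1)" using t by simp
  also have "\<dots> = d / 2" using den unfolding t_def by (simp add: field_simps)
  finally have td: "t * (norm v + norm w) < d" using d by simp
  have inb: "y + s *\<^sub>R v + r *\<^sub>R w \<in> ball y d" if "0 \<le> s" "s \<le> t" "0 \<le> r" "r \<le> t" for s r
    using small_step[OF that td] .
  have inb': "y + s *\<^sub>R w + r *\<^sub>R v \<in> ball y d" if "0 \<le> s" "s \<le> t" "0 \<le> r" "r \<le> t" for s r
    using inb[OF that(3,4,1,2)] by (simp add: algebra_simps)
  have bX: "ball y d \<subseteq> X" using d0 by (auto simp: d_def)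
  have inX: "z \<in> ball y d \<Longrightarrow> z \<in> X" for z using bX by auto
  have b1: "z \<in> ball y d \<Longrightarrow> \<bar>h1 z - h1 y\<bar> < e" for z
    using d1(2)[of z] by (auto simp: d_def dist_commute dist_real_def)
  have b2: "z \<in> ball y d \<Longrightarrow> \<bar>h2 z - h2 y\<bar> < e" for z
    using d2(2)[of z] by (auto simp: d_def dist_commute dist_real_def)
  have inX1: "y + s *\<^sub>R v + r *\<^sub>R w \<in> X" if "0 \<le> s" "s \<le> t" "0 \<le> r" "r \<le> t" for s r
    using inb[OF that] inX by blast
  have inX2: "y + s *\<^sub>R w + r *\<^sub>R v \<in> X" if "0 \<le> s" "s \<le> t" "0 \<le> r" "r \<le> t" for s r
    using inb'[OF that] inX by blast
  have inX1': "y + r *\<^sub>R w \<in> X" if "0 \<le> r" "r \<le> t" for r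
    using inX1[of 0 r] that t by simp
  have inX2': "y + r *\<^sub>R v \<in> X" if "0 \<le> r" "r \<le> t" for r
    using inX2[of 0 r] that t by simp
  have dX: "smooth_on X k \<Longrightarrow> z \<in> X \<Longrightarrow> k differentiable (at z)" for k :: "'a \<Rightarrow> real" and z
    using smooth_at X by blast
  have "\<exists>s\<in>{0<..<t}. (f (y + t *\<^sub>R v + t *\<^sub>R w) - f (y + t *\<^sub>R v)) - (f (y + t *\<^sub>R w) - f y) =
           t * (dd f w (y + t *\<^sub>R v + s *\<^sub>R w) - dd f w (y + s *\<^sub>R w))"
  proof (rule mvt_line2[OF t])
    fix s assume s: "0 \<le> s" "s \<le> t"
    show "f differentiable (at (y + t *\<^sub>R v + s *\<^sub>R w))" using dX[OF sm inX1[of t s]] s t by simp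
    show "f differentiable (at (y + s *\<^sub>R w))" using dX[OF sm inX1'[of s]] s by simp
  qed
  then obtain s1 where s1: "s1 \<in> {0<..<t}" and
    e1: "(f (y + t *\<^sub>R v + t *\<^sub>R w) - f (y + t *\<^sub>R v)) - (f (y + t *\<^sub>R w) - f y) =
           t * (g1 (y + t *\<^sub>R v + s1 *\<^sub>R w) - g1 (y + s1 *\<^sub>R w))"
    unfolding g1_def by blast
  have "\<exists>r\<in>{0<..<t}. g1 (y + s1 *\<^sub>R w + t *\<^sub>R v) - g1 (y + s1 *\<^sub>R w) = t * dd g1 v (y + s1 *\<^sub>R w + r *\<^sub>R v)"
  proof (rule mvt_line1[OF t])
    fix r assume r: "0 \<le> r" "r \<le> t"
    show "g1 differentiable (at (y + s1 *\<^sub>R w + r *\<^sub>R v))" using dX[OF sg1 inX2[of s1 r]] s1 r by simp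
  qed
  then obtain r1 where r1: "r1 \<in> {0<..<t}" and
    e1': "g1 (y + s1 *\<^sub>R w + t *\<^sub>R v) - g1 (y + s1 *\<^sub>R w) = t * h1 (y + s1 *\<^sub>R w + r1 *\<^sub>R v)"
    unfolding h1_def by blast
  have "\<exists>s\<in>{0<..<t}. (f (y + t *\<^sub>R w + t *\<^sub>R v) - f (y + t *\<^sub>R w)) - (f (y + t *\<^sub>R v) - f y) =
           t * (dd f v (y + t *\<^sub>R w + s *\<^sub>R v) - dd f v (y + s *\<^sub>R v))"
  proof (rule mvt_line2[OF t])
    fix s assume s: "0 \<le> s" "s \<le> t"
    show "f differentiable (at (y + t *\<^sub>R w + s *\<^sub>R v))" using dX[OF sm inX2[of t s]] s t by simp
    show "f differentiable (at (y + s *\<^sub>R v))" using dX[OF sm inX2'[of s]] s by simp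
  qed
  then obtain s2 where s2: "s2 \<in> {0<..<t}" and
    e2: "(f (y + t *\<^sub>R w + t *\<^sub>R v) - f (y + t *\<^sub>R w)) - (f (y + t *\<^sub>R v) - f y) =
           t * (g2 (y + t *\<^sub>R w + s2 *\<^sub>R v) - g2 (y + s2 *\<^sub>R v))"
    unfolding g2_def by blast
  have "\<exists>r\<in>{0<..<t}. g2 (y + s2 *\<^sub>R v + t *\<^sub>R w) - g2 (y + s2 *\<^sub>R v) = t * dd g2 w (y + s2 *\<^sub>R v + r *\<^sub>R w)"
  proof (rule mvt_line1[OF t])
    fix r assume r: "0 \<le> r" "r \<le> t"
    show "g2 differentiable (at (y + s2 *\<^sub>R v + r *\<^sub>R w))" using dX[OF sg2 inX1[of s2 r]] s2 r by simp
  qed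
  then obtain r2 where r2: "r2 \<in> {0<..<t}" and
    e2': "g2 (y + s2 *\<^sub>R v + t *\<^sub>R w) - g2 (y + s2 *\<^sub>R v) = t * h2 (y + s2 *\<^sub>R v + r2 *\<^sub>R w)"
    unfolding h2_def by blast
  have c1: "y + t *\<^sub>R v + s1 *\<^sub>R w = y + s1 *\<^sub>R w + t *\<^sub>R v" "y + t *\<^sub>R w + s2 *\<^sub>R v = y + s2 *\<^sub>R v + t *\<^sub>R w"
    "y + t *\<^sub>R w + t *\<^sub>R v = y + t *\<^sub>R v + t *\<^sub>R w"
    by (simp_all add: algebra_simps)
  have "t * (t * h1 (y + s1 *\<^sub>R w + r1 *\<^sub>R v)) = t * (t * h2 (y + s2 *\<^sub>R v + r2 *\<^sub>R w))"
    using e1 e1' e2 e2' unfolding c1 by (simp add: algebra_simps)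
  then have eq: "h1 (y + s1 *\<^sub>R w + r1 *\<^sub>R v) = h2 (y + s2 *\<^sub>R v + r2 *\<^sub>R w)" using t by simp
  have "\<bar>h1 (y + s1 *\<^sub>R w + r1 *\<^sub>R v) - h1 y\<bar> < e" using b1 inb'[of s1 r1] s1 r1 by simp
  moreover have "\<bar>h2 (y + s2 *\<^sub>R v + r2 *\<^sub>R w) - h2 y\<bar> < e" using b2 inb[of s2 r2] s2 r2 by simp
  moreover have gen: "\<bar>a - b\<bar> < \<bar>b - c\<bar> / 2 \<Longrightarrow> \<bar>a - c\<bar> < \<bar>b - c\<bar> / 2 \<Longrightarrow> False" for a b c :: real
    by (simp add: abs_real_def split: if_splits)
  ultimately show False using eq unfolding e_def by metis
qed


lemma inner_mv: "((A::real^'n^'m) *v x) \<bullet> y = x \<bullet> (transpose A *v y)"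
  by (metis dot_lmul_matrix inner_commute vector_transpose_matrix transpose_transpose)

lemma matrix_eq_inner:
  fixes A B :: "real^'n^'m"
  assumes "\<And>v w. (A *v v) \<bullet> w = (B *v v) \<bullet> w"
  shows "A = B"
proof -
  have "A *v v = B *v v" for v
  proof -
    have "(A *v v - B *v v) \<bullet> (A *v v - B *v v) = 0"
      using assms[of v "A *v v - B *v v"] by (simp add: inner_diff_left)
    then show ?thesis by simp
  qed
  then show ?thesis by (simp add: matrix_eq)
qed

lemma lag_iff:
  fixes T :: "real^'n \<Rightarrow> real^'n" and G0 Fx :: "real^'n^'n" and Fu :: "real^'m^'n"
    and Hx :: "real^'n^'m" and Hu S :: "real^'m^'m"
  assumes linT: "linear T" and Tsym: "\<And>a a'. T a \<bullet> a' = T a' \<bullet> a"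
    and G0s: "transpose G0 = G0" and Ss: "transpose S = S"
    and Ldef: "L = (\<lambda>z. ((fst z, T (fst z) + G0 *v (Fx *v fst z + Fu *v snd z)),
                     (snd z, S *v (Hx *v fst z + Hu *v snd z))))"
  shows "lagrangian_subspace (range L) \<longleftrightarrow>
     (S ** Hu = transpose Hu ** S \<and> G0 ** Fu = transpose Hx ** S \<and> G0 ** Fx = transpose Fx ** G0)"
proof -
  interpret T: linear T by fact
  have linL: "linear L"
    unfolding Ldef by (rule linearI) (auto simp: algebra_simps T.add T.scale matrix_vector_right_distrib)
  have subL: "subspace (range L)"
    using real_vector.linear_subspace_image[OF linL subspace_UNIV] by simp
  have om: "symp_form (L z) (L z') =
     ((G0 ** Fx) *v fst z) \<bullet> fst z' - ((G0 ** Fx) *v fst z') \<bullet> fst z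
     + ((G0 ** Fu) *v snd z) \<bullet> fst z' - ((S ** Hx) *v fst z') \<bullet> snd z
     + ((S ** Hx) *v fst z) \<bullet> snd z' - ((G0 ** Fu) *v snd z') \<bullet> fst z
     + ((S ** Hu) *v snd z) \<bullet> snd z' - ((S ** Hu) *v snd z') \<bullet> snd z" for z z'
    unfolding Ldef symp_form_def
    by (simp add: split_beta inner_add_left inner_add_right matrix_vector_right_distrib
        matrix_vector_mul_assoc Tsym[of "fst z"] algebra_simps)
  have iso_iff: "isotropic_subspace (range L) \<longleftrightarrow>
     (S ** Hu = transpose Hu ** S \<and> G0 ** Fu = transpose Hx ** S \<and> G0 ** Fx = transpose Fx ** G0)"
  proof
    assume "isotropic_subspace (range L)"
    then have iso: "\<And>z z'. symp_form (L z) (L z') = 0" unfolding isotropic_subspace_def by auto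
    have 1: "S ** Hu = transpose Hu ** S"
    proof (rule matrix_eq_inner)
      fix v w
      show "((S ** Hu) *v v) \<bullet> w = ((transpose Hu ** S) *v v) \<bullet> w"
      proof -
        have e: "((transpose Hu ** S) *v v) \<bullet> w = v \<bullet> ((S ** Hu) *v w)"
          by (simp add: inner_mv matrix_transpose_mul Ss)
        show ?thesis using iso[of "(0,v)" "(0,w)"] unfolding om e
          by (simp add: inner_commute)
      qed
    qed
    have 2: "G0 ** Fu = transpose Hx ** S"
    proof (rule matrix_eq_inner)
      fix v w
      show "((G0 ** Fu) *v v) \<bullet> w = ((transpose Hx ** S) *v v) \<bullet> w"
      proof -
        have e: "((transpose Hx ** S) *v v) \<bullet> w = v \<bullet> ((S ** Hx) *v w)"
          by (simp add: inner_mv matrix_transpose_mul Ss)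
        show ?thesis using iso[of "(w,0)" "(0,v)"] unfolding om e
          by (simp add: inner_commute)
      qed
    qed
    have 3: "G0 ** Fx = transpose Fx ** G0"
    proof (rule matrix_eq_inner)
      fix v w
      show "((G0 ** Fx) *v v) \<bullet> w = ((transpose Fx ** G0) *v v) \<bullet> w"
      proof -
        have e: "((transpose Fx ** G0) *v v) \<bullet> w = v \<bullet> ((G0 ** Fx) *v w)"
          by (simp add: inner_mv matrix_transpose_mul G0s)
        show ?thesis using iso[of "(v,0)" "(w,0)"] unfolding om e
          by (simp add: inner_commute)
      qed
    qed
    show "S ** Hu = transpose Hu ** S \<and> G0 ** Fu = transpose Hx ** S \<and> G0 ** Fx = transpose Fx ** G0"
      using 1 2 3 by blast
  next
    assume c: "S ** Hu = transpose Hu ** S \<and> G0 ** Fu = transpose Hx ** S \<and> G0 ** Fx = transpose Fx ** G0"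
    have "symp_form (L z) (L z') = 0" for z z'
    proof -
      have a: "((G0 ** Fx) *v p) \<bullet> q = ((G0 ** Fx) *v q) \<bullet> p" for p q
        by (metis c inner_commute inner_mv matrix_transpose_mul G0s)
      have b: "((S ** Hu) *v p) \<bullet> q = ((S ** Hu) *v q) \<bullet> p" for p q
        by (metis c inner_commute inner_mv matrix_transpose_mul Ss)
      have d: "((G0 ** Fu) *v p) \<bullet> q = ((S ** Hx) *v q) \<bullet> p" for p q
        by (metis c inner_commute inner_mv matrix_transpose_mul Ss)
      show ?thesis unfolding om a[of "fst z'"] b[of "snd z'"] d by simp
    qed
    then show "isotropic_subspace (range L)" unfolding isotropic_subspace_def using subL by auto
  qed
  have max: "W = range L" if W: "isotropic_subspace W" "range L \<subseteq> W" for W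
  proof
    show "range L \<subseteq> W" by fact
    show "W \<subseteq> range L"
    proof
      fix w assume w: "w \<in> W"
      obtain c d e f where wd: "w = ((c,d),(e,f))" by (metis prod.exhaust)
      define v where "v = L (c,e)"
      have vW: "v \<in> W" using W(2) v_def by auto
      obtain d' f' where vd: "v = ((c,d'),(e,f'))" unfolding v_def Ldef by auto
      have sW: "subspace W" using W(1) unfolding isotropic_subspace_def by auto
      have dW: "w - v \<in> W" using subspace_diff[OF sW w vW] .
      have "symp_form (w - v) (L (d - d', f - f')) = 0"
        using W dW unfolding isotropic_subspace_def by auto
      then have "(d - d') \<bullet> (d - d') + (f - f') \<bullet> (f - f') = 0"
        unfolding wd vd Ldef symp_form_def by simp
      then have "d = d'" "f = f'"
        by (metis add_nonneg_eq_0_iff inner_ge_zero inner_eq_zero_iff right_minus_eq)+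
      then show "w \<in> range L" using vd wd v_def by (metis rangeI)
    qed
  qed
  show ?thesis
    unfolding lagrangian_subspace_def iso_iff[symmetric] using max by blast
qed


lemma has_derivative_vec:
  fixes f :: "'a::real_normed_vector \<Rightarrow> 'b::euclidean_space ^ 'n"
  assumes "\<And>i. ((\<lambda>y. f y $ i) has_derivative f' i) (at y)"
  shows "(f has_derivative (\<lambda>h. \<chi> i. f' i h)) (at y)"
proof -
  have "((\<lambda>x. f x \<bullet> b) has_derivative (\<lambda>x. (\<chi> i. f' i x) \<bullet> b)) (at y)" if b: "b \<in> Basis" for b
  proof -
    obtain i u where iu: "b = axis i u" "u \<in> Basis" using b unfolding Basis_vec_def by auto
    have "((\<lambda>x. f x $ i \<bullet> u) has_derivative (\<lambda>x. f' i x \<bullet> u)) (at y)"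
      using bounded_linear.has_derivative[OF bounded_linear_inner_left assms[of i]] .
    then show ?thesis unfolding iu by (simp add: inner_axis)
  qed
  then show ?thesis using has_derivative_componentwise_within[of f _ y UNIV] by simp
qed

lemma has_derivative_nth:
  "(f has_derivative f') (at y) \<Longrightarrow> ((\<lambda>y. f y $ i) has_derivative (\<lambda>h. f' h $ i)) (at y)"
  using bounded_linear.has_derivative[OF bounded_linear_vec_nth] .

lemma lin_expand:
  fixes M :: "real^'n \<Rightarrow> real"
  assumes "linear M"
  shows "M a = (\<Sum>i\<in>UNIV. a$i * M (axis i 1))"
proof -
  have "a = (\<Sum>i\<in>UNIV. a$i *\<^sub>R axis i 1)" using basis_expansion[of a] by (simp add: scalar_mult_eq_scaleR)
  then have "M a = M (\<Sum>i\<in>UNIV. a$i *\<^sub>R axis i 1)" by simp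
  also have "\<dots> = (\<Sum>i\<in>UNIV. a$i * M (axis i 1))"
    by (simp add: linear_sum[OF assms] linear_scale[OF assms])
  finally show ?thesis .
qed

lemma bb_mv: "bounded_bilinear ((*v) :: real^'n^'m \<Rightarrow> real^'n \<Rightarrow> real^'m)"
proof -
  have "bilinear ((*v) :: real^'n^'m \<Rightarrow> real^'n \<Rightarrow> real^'m)"
    unfolding bilinear_def
    by (auto intro!: linearI simp: matrix_vector_mult_add_rdistrib scaleR_matrix_vector_assoc
        matrix_vector_right_distrib matrix_vector_mult_scaleR)
  then show ?thesis using bilinear_conv_bounded_bilinear by blast
qed

theorem proposition3p6:
  fixes X :: "(real^'n) set" and K :: "real^'n \<Rightarrow> real"
    and S :: "real^'m^'m"
    and F :: "real^'n \<Rightarrow> real^'m \<Rightarrow> real^'n" and H :: "real^'n \<Rightarrow> real^'m \<Rightarrow> real^'m"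
  assumes "open X" and "convex X" and "connected X"
    and "smooth_on X K"
    and "\<forall>x\<in>X. invertible (hessian K x)"
    and "signature_matrix S"
    and "smooth_on (X \<times> UNIV) (\<lambda>z. F (fst z) (snd z))"
    and "smooth_on (X \<times> UNIV) (\<lambda>z. H (fst z) (snd z))"
  shows "reciprocal (hessian K) S X F H \<longleftrightarrow>
    (\<forall>x\<in>X. \<forall>u.
       S ** jac_u H x u = transpose (jac_u H x u) ** S \<and>
       hessian K x ** jac_u F x u = transpose (jac_x H x u) ** S \<and>
       hessian K x ** jac_x F x u = transpose (jac_x F x u) ** hessian K x)"
proof -
  note Xo = assms(1) and smK = assms(4) and sig = assms(6)
  define Fz where "Fz = (\<lambda>z. F (fst z) (snd z))"
  define Hz where "Hz = (\<lambda>z. H (fst z) (snd z))"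
  have smF: "smooth_on (X \<times> UNIV) Fz" using assms(7) unfolding Fz_def .
  have smH: "smooth_on (X \<times> UNIV) Hz" using assms(8) unfolding Hz_def .
  have oXU: "open (X \<times> (UNIV :: (real^'m) set))" by (simp add: open_Times Xo)
  have Ssym: "S $ j $ i = S $ i $ j" for i j
    using sig unfolding signature_matrix_def by (cases "i = j") auto
  have Ss: "transpose S = S" by (simp add: transpose_def vec_eq_iff Ssym)
  define g where "g = (\<lambda>i z. dd K (axis i 1) z)"
  have sg: "smooth_on X (g i)" for i unfolding g_def using smooth_dd[OF smK] .
  define hk where "hk = (\<lambda>i k y. dd (g i) (axis k 1) y)"
  have shk: "smooth_on X (hk i k)" for i k unfolding hk_def using smooth_dd[OF sg] .
  have hess: "hessian K y = (\<chi> i k. hk i k y)" if y: "y \<in> X" for y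
  proof -
    have "(gradient_vec K has_derivative (\<lambda>h. \<chi> i. dd (g i) h y)) (at y)"
      unfolding gradient_vec_def
      apply (rule has_derivative_vec)
      using smooth_has[OF sg Xo y] unfolding g_def by simp
    then have "frechet_derivative (gradient_vec K) (at y) = (\<lambda>h. \<chi> i. dd (g i) h y)"
      by (rule frechet_derivative_at[symmetric])
    then show ?thesis unfolding hessian_def matrix_def hk_def by simp
  qed
  have hsym: "hk i k y = hk k i y" if "y \<in> X" for i k y
    unfolding hk_def g_def using schwarz[OF Xo that smK, where w="axis i 1" and v="axis k 1"] .
  have point: "lagrangian_subspace (range (frechet_derivative (recip_param (hessian K) S F H) (at (x,u))))
     \<longleftrightarrow> (S ** jac_u H x u = transpose (jac_u H x u) ** S \<and>
       hessian K x ** jac_u F x u = transpose (jac_x H x u) ** S \<and>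
       hessian K x ** jac_x F x u = transpose (jac_x F x u) ** hessian K x)"
    if x: "x \<in> X" for x u
  proof -
    define F0 where "F0 = F x u"
    define G0 where "G0 = hessian K x"
    define dG where "dG = (\<lambda>a. \<chi> i k. dd (hk i k) a x)"
    have HG: "(hessian K has_derivative dG) (at x)"
    proof -
      have "((\<lambda>y. \<chi> i k. hk i k y) has_derivative dG) (at x)"
        unfolding dG_def
        apply (rule has_derivative_vec)
        apply simp
        apply (rule has_derivative_vec)
        apply simp
        using smooth_has[OF shk Xo x] .
      then show ?thesis
        by (rule has_derivative_transform_within_open[OF _ Xo x]) (simp add: hess)
    qed
    have G0s: "transpose G0 = G0"
      unfolding G0_def using hess[OF x] hsym[OF x] by (simp add: transpose_def vec_eq_iff)
    have blG: "bounded_linear dG" using HG has_derivative_bounded_linear by blast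
    interpret dG: bounded_linear dG by (rule blG)
    define T where "T = (\<lambda>a. dG a *v F0)"
    have linT: "linear T" unfolding T_def
      by (auto intro!: linearI simp: dG.add dG.scale matrix_vector_mult_add_rdistrib
          scaleR_matrix_vector_assoc[symmetric])
    have dGe: "dG a $ i $ k = dd (\<lambda>y. dd (g k) a y) (axis i 1) x" for a i k
    proof -
      have "dG a $ i $ k = dd (hk i k) a x" unfolding dG_def by simp
      also have "\<dots> = dd (\<lambda>y. dd (g k) (axis i 1) y) a x"
        using frechet_derivative_transform_within_open[OF smooth_at[OF shk[of i k] Xo x] Xo x,
            where g="\<lambda>y. dd (g k) (axis i 1) y"] hsym unfolding hk_def by auto
      also have "\<dots> = dd (\<lambda>y. dd (g k) a y) (axis i 1) x"
        using schwarz[OF Xo x sg, where w = "axis i 1" and v = a] .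
      finally show ?thesis .
    qed
    have lin_gk: "linear (frechet_derivative (\<lambda>y. dd (g k) a y) (at x))" for k a
      using smooth_at[OF smooth_dd[OF sg] Xo x] linear_frechet_derivative by blast
    have Tform: "T a \<bullet> a' = (\<Sum>k\<in>UNIV. F0$k * dd (\<lambda>y. dd (g k) a y) a' x)" for a a'
    proof -
      have "T a \<bullet> a' = (\<Sum>i\<in>UNIV. (\<Sum>k\<in>UNIV. dG a $ i $ k * F0 $ k) * a' $ i)"
        unfolding T_def by (simp add: inner_vec_def matrix_vector_mult_def)
      also have "\<dots> = (\<Sum>i\<in>UNIV. \<Sum>k\<in>UNIV. F0$k * (a'$i * dd (\<lambda>y. dd (g k) a y) (axis i 1) x))"
        by (simp add: dGe sum_distrib_right sum_distrib_left mult_ac)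
      also have "\<dots> = (\<Sum>k\<in>UNIV. \<Sum>i\<in>UNIV. F0$k * (a'$i * dd (\<lambda>y. dd (g k) a y) (axis i 1) x))"
        by (rule sum.swap)
      also have "\<dots> = (\<Sum>k\<in>UNIV. F0$k * (\<Sum>i\<in>UNIV. a'$i * dd (\<lambda>y. dd (g k) a y) (axis i 1) x))"
        by (simp add: sum_distrib_left)
      also have "\<dots> = (\<Sum>k\<in>UNIV. F0$k * dd (\<lambda>y. dd (g k) a y) a' x)"
        using lin_expand[OF lin_gk, symmetric] by simp
      finally show ?thesis .
    qed
    have Tsym: "T a \<bullet> a' = T a' \<bullet> a" for a a'
      unfolding Tform using schwarz[OF Xo x sg, where w = a and v = a'] by simp
    have xu: "(x,u) \<in> X \<times> UNIV" using x by simp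
    define DF where "DF = frechet_derivative Fz (at (x,u))"
    define DH where "DH = frechet_derivative Hz (at (x,u))"
    have hasF: "(Fz has_derivative DF) (at (x,u))" unfolding DF_def using smooth_has[OF smF oXU xu] .
    have hasH: "(Hz has_derivative DH) (at (x,u))" unfolding DH_def using smooth_has[OF smH oXU xu] .
    interpret DF: bounded_linear DF using hasF has_derivative_bounded_linear by blast
    interpret DH: bounded_linear DH using hasH has_derivative_bounded_linear by blast
    have px: "((\<lambda>x'. (x',u)) has_derivative (\<lambda>a. (a,0))) (at x)" by (auto intro!: derivative_eq_intros)
    have pu: "((\<lambda>u'. (x,u')) has_derivative (\<lambda>b. (0,b))) (at u)" by (auto intro!: derivative_eq_intros)
    have jFx: "jac_x F x u *v a = DF (a,0)" for a
    proof -
      have "((\<lambda>x'. F x' u) has_derivative (\<lambda>a. DF (a,0))) (at x)"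
        using has_derivative_compose[OF px, of Fz DF] hasF unfolding Fz_def by simp
      moreover have "linear (\<lambda>a. DF (a,0))" using calculation has_derivative_linear by blast
      ultimately show ?thesis unfolding jac_x_def
        by (simp add: frechet_derivative_at[symmetric] matrix_works linear_matrix_vector_mul_eq)
    qed
    have jFu: "jac_u F x u *v b = DF (0,b)" for b
    proof -
      have "((\<lambda>u'. F x u') has_derivative (\<lambda>b. DF (0,b))) (at u)"
        using has_derivative_compose[OF pu, of Fz DF] hasF unfolding Fz_def by simp
      moreover have "linear (\<lambda>b. DF (0,b))" using calculation has_derivative_linear by blast
      ultimately show ?thesis unfolding jac_u_def
        by (simp add: frechet_derivative_at[symmetric] matrix_works linear_matrix_vector_mul_eq)
    qed
    have jHx: "jac_x H x u *v a = DH (a,0)" for a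
    proof -
      have "((\<lambda>x'. H x' u) has_derivative (\<lambda>a. DH (a,0))) (at x)"
        using has_derivative_compose[OF px, of Hz DH] hasH unfolding Hz_def by simp
      moreover have "linear (\<lambda>a. DH (a,0))" using calculation has_derivative_linear by blast
      ultimately show ?thesis unfolding jac_x_def
        by (simp add: frechet_derivative_at[symmetric] matrix_works linear_matrix_vector_mul_eq)
    qed
    have jHu: "jac_u H x u *v b = DH (0,b)" for b
    proof -
      have "((\<lambda>u'. H x u') has_derivative (\<lambda>b. DH (0,b))) (at u)"
        using has_derivative_compose[OF pu, of Hz DH] hasH unfolding Hz_def by simp
      moreover have "linear (\<lambda>b. DH (0,b))" using calculation has_derivative_linear by blast
      ultimately show ?thesis unfolding jac_u_def
        by (simp add: frechet_derivative_at[symmetric] matrix_works linear_matrix_vector_mul_eq)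
    qed
    have DFs: "DF (a,b) = DF (a,0) + DF (0,b)" for a b
      using DF.add[of "(a,0)" "(0,b)"] by simp
    have DHs: "DH (a,b) = DH (a,0) + DH (0,b)" for a b
      using DH.add[of "(a,0)" "(0,b)"] by simp
    have Peq: "recip_param (hessian K) S F H = (\<lambda>z. ((fst z, hessian K (fst z) *v Fz z), (snd z, S *v Hz z)))"
      unfolding recip_param_def Fz_def Hz_def by (simp add: case_prod_beta')
    have fstd: "((\<lambda>z::((real^'n) \<times> (real^'m)). fst z) has_derivative (\<lambda>h. fst h)) (at (x,u))"
      by (rule has_derivative_fst[OF has_derivative_ident])
    have sndd: "((\<lambda>z::((real^'n) \<times> (real^'m)). snd z) has_derivative (\<lambda>h. snd h)) (at (x,u))"
      by (rule has_derivative_snd[OF has_derivative_ident])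
    have HG': "(hessian K has_derivative dG) (at (fst (x,u)))" using HG by simp
    have hasG: "((\<lambda>z. hessian K (fst z)) has_derivative (\<lambda>h. dG (fst h))) (at (x,u))"
      using has_derivative_compose[OF fstd HG'] .
    define L0 where "L0 = (\<lambda>h::((real^'n) \<times> (real^'m)). ((fst h, hessian K (fst (x,u)) *v DF h + dG (fst h) *v Fz (x,u)),
        (snd h, S *v DH h)))"
    have hasP: "(recip_param (hessian K) S F H has_derivative L0) (at (x,u))"
      unfolding Peq L0_def
      by (intro has_derivative_Pair fstd sndd bounded_bilinear.FDERIV[OF bb_mv hasG hasF]
          bounded_linear.has_derivative[OF matrix_vector_mul_bounded_linear hasH])
    define L where "L = (\<lambda>z. ((fst z, T (fst z) + G0 *v (jac_x F x u *v fst z + jac_u F x u *v snd z)),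
                     (snd z, S *v (jac_x H x u *v fst z + jac_u H x u *v snd z))))"
    have "L0 = L"
    proof
      fix h :: "(real^'n) \<times> (real^'m)"
      obtain a b where h: "h = (a,b)" by (cases h)
      show "L0 h = L h"
        unfolding h L0_def L_def T_def G0_def F0_def Fz_def jFx jFu jHx jHu
        using DFs[of a b] DHs[of a b] by (simp add: add.commute)
    qed
    then have fd: "frechet_derivative (recip_param (hessian K) S F H) (at (x,u)) = L"
      using frechet_derivative_at[OF hasP] by simp
    show ?thesis
      unfolding fd using lag_iff[OF linT Tsym G0s Ss L_def] unfolding G0_def .
  qed
  show ?thesis unfolding reciprocal_def using point by blast
qed

end
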